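(* Let $X$, $Y_k$ ($k\in\mathbb N$) and norms $\|\cdot\|_{X\oplus Y_k}$ be as in the generalized $\ell^2$-sum setting. Then $\Lambda(X\oplus Y_k)$ is compact in the weak$^*$ topology of the dual of $(\Sigma(X\oplus Y_k),\|\cdot\|_\Sigma)$.
   Context: Setting: $(X,\|\cdot\|_X)$ and $(Y_k,\|\cdot\|_{Y_k})$, $k\in\mathbb N$, are Banach spaces; for each $k$, $\|\cdot\|_{X\oplus Y_k}$ is a norm on $X\oplus Y_k$ coinciding with $\|\cdot\|_X$ on $X$ and with $\|\cdot\|_{Y_k}$ on $Y_k$, and monotone: $\|x+y_k\|_{X\oplus Y_k}\ge\|x\|_X$. Duals of direct sums are identified with direct sums of duals via $(x^*+y^* )(x+y)=x^*(x)+y^*(y)$. $\Lambda(X\oplus Y_k)$ is the set of functionals $x^*+\sum_k\alpha_ky_k^*$ (acting by $x+\sum y_k\mapsto x^*(x)+\sum\alpha_ky_k^*(y_k)$) with $x^*\in X^*$, $y_k^*\in Y_k^*$, $\|x^*+y_k^*\|_{X\oplus Y_k}\le1$ for all $k$, $0\le\alpha_k\le1$, $\sum\alpha_k^2\le1$. $\Sigma(X\oplus Y_k)=\{x+y_1+y_2+\dots:x\in X,y_k\in Y_k,\sum\|y_k\|_{Y_k}^2<\infty\}$ with $\|z\|_\Sigma=\sup\{|z^*(z)|:z^*\in\Lambda(X\oplus Y_k)\}$. *)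

theory Defs
  imports "HOL-Analysis.Analysis"
begin

text \<open>X is a real Banach space (the type 'x). Each Y k is a Banach space,
modelled as a closed linear subspace of a Banach type 'y with the induced norm.
N k x y is the norm of x + y in X \<oplus> Y k.\<close>

definition l2sum_setting ::
  "('x::banach itself) \<Rightarrow> (nat \<Rightarrow> 'y::banach set) \<Rightarrow> (nat \<Rightarrow> 'x \<Rightarrow> 'y \<Rightarrow> real) \<Rightarrow> bool" where
  "l2sum_setting _ Y N \<longleftrightarrow>
     (\<forall>k. subspace (Y k) \<and> closed (Y k)) \<and>
     \<comment> \<open>N k is a norm on X \<oplus> Y k\<close>
     (\<forall>k x y. y \<in> Y k \<longrightarrow> 0 \<le> N k x y) \<and>
     (\<forall>k x y. y \<in> Y k \<longrightarrow> N k x y = 0 \<longrightarrow> x = 0 \<and> y = 0) \<and>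
     (\<forall>k c x y. y \<in> Y k \<longrightarrow> N k (c *\<^sub>R x) (c *\<^sub>R y) = \<bar>c\<bar> * N k x y) \<and>
     (\<forall>k x1 y1 x2 y2. y1 \<in> Y k \<longrightarrow> y2 \<in> Y k \<longrightarrow>
        N k (x1 + x2) (y1 + y2) \<le> N k x1 y1 + N k x2 y2) \<and>
     \<comment> \<open>coincides with the given norms on X and on Y k\<close>
     (\<forall>k x. N k x 0 = norm x) \<and>
     (\<forall>k y. y \<in> Y k \<longrightarrow> N k 0 y = norm y) \<and>
     \<comment> \<open>monotone\<close>
     (\<forall>k x y. y \<in> Y k \<longrightarrow> norm x \<le> N k x y)"

text \<open>Y k^*: bounded linear functionals on the subspace Y k (values off Y k irrelevant).\<close>
definition dual_on :: "'y::real_normed_vector set \<Rightarrow> ('y \<Rightarrow> real) set" where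
  "dual_on S = {f. (\<forall>u\<in>S. \<forall>v\<in>S. \<forall>a b. f (a *\<^sub>R u + b *\<^sub>R v) = a * f u + b * f v)
                    \<and> (\<exists>C. \<forall>u\<in>S. \<bar>f u\<bar> \<le> C * norm u)}"

definition sum_dual_norm ::
  "('y::real_normed_vector) set \<Rightarrow> ('x \<Rightarrow> 'y \<Rightarrow> real) \<Rightarrow> ('x \<Rightarrow> real) \<Rightarrow> ('y \<Rightarrow> real) \<Rightarrow> real" where
  "sum_dual_norm Yk Nk xs ys = Sup {\<bar>xs x + ys y\<bar> | x y. y \<in> Yk \<and> Nk x y \<le> 1}"

text \<open>\<Sigma>(X \<oplus> Y k): an element x + y_1 + y_2 + ... is represented by the pair (x, (y_k)_k).\<close>
definition Sigma_set :: "(nat \<Rightarrow> 'y::real_normed_vector set) \<Rightarrow> ('x \<times> (nat \<Rightarrow> 'y)) set" where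
  "Sigma_set Y = {(x, ys). (\<forall>k. ys k \<in> Y k) \<and> summable (\<lambda>k. (norm (ys k))\<^sup>2)}"

definition Lambda_fun ::
  "(nat \<Rightarrow> 'y::real_normed_vector set) \<Rightarrow> ('x \<Rightarrow> real) \<Rightarrow> (nat \<Rightarrow> real) \<Rightarrow> (nat \<Rightarrow> 'y \<Rightarrow> real)
     \<Rightarrow> ('x \<times> (nat \<Rightarrow> 'y) \<Rightarrow> real)" where
  "Lambda_fun Y xs \<alpha> ys =
     restrict (\<lambda>(x, yy). xs x + (\<Sum>k. \<alpha> k * ys k (yy k))) (Sigma_set Y)"

definition Lambda_set ::
  "(nat \<Rightarrow> 'y::real_normed_vector set) \<Rightarrow> (nat \<Rightarrow> 'x::real_normed_vector \<Rightarrow> 'y \<Rightarrow> real)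
     \<Rightarrow> ('x \<times> (nat \<Rightarrow> 'y) \<Rightarrow> real) set" where
  "Lambda_set Y N = {Lambda_fun Y xs \<alpha> ys | xs \<alpha> ys.
      bounded_linear xs \<and> (\<forall>k. ys k \<in> dual_on (Y k)) \<and>
      (\<forall>k. sum_dual_norm (Y k) (N k) xs (ys k) \<le> 1) \<and>
      (\<forall>k. 0 \<le> \<alpha> k \<and> \<alpha> k \<le> 1) \<and> summable (\<lambda>k. (\<alpha> k)\<^sup>2) \<and> (\<Sum>k. (\<alpha> k)\<^sup>2) \<le> 1}"

definition Sigma_norm ::
  "(nat \<Rightarrow> 'y::real_normed_vector set) \<Rightarrow> (nat \<Rightarrow> 'x::real_normed_vector \<Rightarrow> 'y \<Rightarrow> real)
     \<Rightarrow> ('x \<times> (nat \<Rightarrow> 'y)) \<Rightarrow> real" where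
  "Sigma_norm Y N z = Sup {\<bar>f z\<bar> | f. f \<in> Lambda_set Y N}"

definition sig_add :: "('x::real_vector \<times> (nat \<Rightarrow> 'y::real_vector)) \<Rightarrow> ('x \<times> (nat \<Rightarrow> 'y)) \<Rightarrow> ('x \<times> (nat \<Rightarrow> 'y))" where
  "sig_add z w = (fst z + fst w, \<lambda>k. snd z k + snd w k)"
definition sig_scale :: "real \<Rightarrow> ('x::real_vector \<times> (nat \<Rightarrow> 'y::real_vector)) \<Rightarrow> ('x \<times> (nat \<Rightarrow> 'y))" where
  "sig_scale c z = (c *\<^sub>R fst z, \<lambda>k. c *\<^sub>R snd z k)"

definition Sigma_dual ::
  "(nat \<Rightarrow> 'y::real_normed_vector set) \<Rightarrow> (nat \<Rightarrow> 'x::real_normed_vector \<Rightarrow> 'y \<Rightarrow> real)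
     \<Rightarrow> ('x \<times> (nat \<Rightarrow> 'y) \<Rightarrow> real) set" where
  "Sigma_dual Y N = {f \<in> extensional (Sigma_set Y).
      (\<forall>z\<in>Sigma_set Y. \<forall>w\<in>Sigma_set Y. \<forall>a b.
          f (sig_add (sig_scale a z) (sig_scale b w)) = a * f z + b * f w) \<and>
      (\<exists>C. \<forall>z\<in>Sigma_set Y. \<bar>f z\<bar> \<le> C * Sigma_norm Y N z)}"

text \<open>Weak* topology on the dual: topology of pointwise convergence on \<Sigma>.\<close>
definition weak_star_Sigma ::
  "(nat \<Rightarrow> 'y::real_normed_vector set) \<Rightarrow> (nat \<Rightarrow> 'x::real_normed_vector \<Rightarrow> 'y \<Rightarrow> real)
     \<Rightarrow> ('x \<times> (nat \<Rightarrow> 'y) \<Rightarrow> real) topology" where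
  "weak_star_Sigma Y N =
     subtopology (product_topology (\<lambda>_. euclideanreal) (Sigma_set Y)) (Sigma_dual Y N)"

end

theory Submission
  imports Defs
begin


definition TP :: "(('x \<Rightarrow> real) \<times> (nat \<Rightarrow> real) \<times> (nat \<Rightarrow> 'y \<Rightarrow> real)) topology" where
"TP = prod_topology (product_topology (\<lambda>_. euclideanreal) UNIV)
   (prod_topology (product_topology (\<lambda>_. euclideanreal) UNIV)
     (product_topology (\<lambda>_. product_topology (\<lambda>_. euclideanreal) UNIV) UNIV))"

lemma topspace_TP [simp]: "topspace TP = UNIV"
  by (simp add: TP_def PiE_UNIV_domain)

lemma ev1: "continuous_map TP euclideanreal (\<lambda>p. fst p x)"
  unfolding TP_def
  using continuous_map_compose[OF continuous_map_fst continuous_map_product_projection[of x UNIV "\<lambda>_. euclideanreal"]]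
  by (simp add: o_def)

lemma ev2: "continuous_map TP euclideanreal (\<lambda>p. fst (snd p) k)"
proof -
  have "continuous_map TP (prod_topology (product_topology (\<lambda>_. euclideanreal) UNIV)
     (product_topology (\<lambda>_. product_topology (\<lambda>_. euclideanreal) UNIV) UNIV)) snd"
    unfolding TP_def by (rule continuous_map_snd)
  from continuous_map_compose[OF continuous_map_compose[OF this continuous_map_fst] continuous_map_product_projection[of k UNIV "\<lambda>_. euclideanreal"]]
  show ?thesis by (simp add: o_def)
qed

lemma ev3: "continuous_map TP euclideanreal (\<lambda>p. snd (snd p) k y)"
proof -
  have "continuous_map TP (prod_topology (product_topology (\<lambda>_. euclideanreal) UNIV)
     (product_topology (\<lambda>_. product_topology (\<lambda>_. euclideanreal) UNIV) UNIV)) snd"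
    unfolding TP_def by (rule continuous_map_snd)
  from continuous_map_compose[OF continuous_map_compose[OF continuous_map_compose[OF this continuous_map_snd] continuous_map_product_projection[of k UNIV]] continuous_map_product_projection[of y UNIV "\<lambda>_. euclideanreal"]]
  show ?thesis by (simp add: o_def)
qed

lemma cl_le:
  assumes "continuous_map X euclideanreal g" "continuous_map X euclideanreal h"
  shows "closedin X {p \<in> topspace X. g p \<le> h p}"
proof -
  have "continuous_map X euclideanreal (\<lambda>p. g p - h p)"
    using assms by (rule continuous_map_diff)
  from closedin_continuous_map_preimage[OF this, of "{..0}"]
  show ?thesis by simp
qed

lemma cl_eq:
  assumes "continuous_map X euclideanreal g" "continuous_map X euclideanreal h"
  shows "closedin X {p \<in> topspace X. g p = h p}"
proof -
  have "{p \<in> topspace X. g p = h p} = {p \<in> topspace X. g p \<le> h p} \<inter> {p \<in> topspace X. h p \<le> g p}"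
    by auto
  then show ?thesis using cl_le[OF assms] cl_le[OF assms(2,1)] by (simp add: closedin_Int)
qed

lemma cl_all:
  assumes "\<And>i. closedin X {p \<in> topspace X. P i p}"
  shows "closedin X {p \<in> topspace X. \<forall>i. P i p}"
proof -
  have "{p \<in> topspace X. \<forall>i. P i p} = \<Inter> (range (\<lambda>i. {p \<in> topspace X. P i p}))"
    by auto
  also have "closedin X \<dots>"
    by (rule closedin_Inter) (use assms in auto)
  finally show ?thesis .
qed

lemma cl_imp:
  assumes "A \<Longrightarrow> closedin X {p \<in> topspace X. Q p}"
  shows "closedin X {p \<in> topspace X. A \<longrightarrow> Q p}"
  using assms by (cases A) auto

lemma cl_conj:
  assumes "closedin X {p \<in> topspace X. A p}" "closedin X {p \<in> topspace X. B p}"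
  shows "closedin X {p \<in> topspace X. A p \<and> B p}"
proof -
  have "{p \<in> topspace X. A p \<and> B p} = {p \<in> topspace X. A p} \<inter> {p \<in> topspace X. B p}" by auto
  then show ?thesis using assms by (simp add: closedin_Int)
qed

lemma cl_abs:
  assumes "continuous_map X euclideanreal g" "continuous_map X euclideanreal h"
  shows "closedin X {p \<in> topspace X. \<bar>g p\<bar> \<le> h p}"
proof -
  have "{p \<in> topspace X. \<bar>g p\<bar> \<le> h p} = {p \<in> topspace X. g p \<le> h p} \<inter> {p \<in> topspace X. - h p \<le> g p}"
    by auto
  moreover have "continuous_map X euclideanreal (\<lambda>p. - h p)"
    using assms(2) by (simp add: continuous_map_minus)
  ultimately show ?thesis using cl_le[OF assms] cl_le[OF _ assms(1)] by (simp add: closedin_Int)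
qed

definition KP :: "(nat \<Rightarrow> 'y::real_normed_vector set) \<Rightarrow> (nat \<Rightarrow> 'x::real_normed_vector \<Rightarrow> 'y \<Rightarrow> real)
   \<Rightarrow> (('x \<Rightarrow> real) \<times> (nat \<Rightarrow> real) \<times> (nat \<Rightarrow> 'y \<Rightarrow> real)) set" where
"KP Y N = {p. (\<forall>u v a b. fst p (a *\<^sub>R u + b *\<^sub>R v) = a * fst p u + b * fst p v) \<and>
   (\<forall>x. \<bar>fst p x\<bar> \<le> norm x) \<and>
   (\<forall>k u v a b. u \<in> Y k \<longrightarrow> v \<in> Y k \<longrightarrow>
      snd (snd p) k (a *\<^sub>R u + b *\<^sub>R v) = a * snd (snd p) k u + b * snd (snd p) k v) \<and>
   (\<forall>k y. y \<notin> Y k \<longrightarrow> snd (snd p) k y = 0) \<and>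
   (\<forall>k y. \<bar>snd (snd p) k y\<bar> \<le> norm y) \<and>
   (\<forall>k x y. y \<in> Y k \<longrightarrow> \<bar>fst p x + snd (snd p) k y\<bar> \<le> N k x y) \<and>
   (\<forall>k. 0 \<le> fst (snd p) k \<and> fst (snd p) k \<le> 1) \<and>
   (\<forall>n. (\<Sum>k<n. fst (snd p) k * fst (snd p) k) \<le> 1)}"

lemma KP_closed: "closedin TP (KP Y N)"
proof -
  have "KP Y N = {p \<in> topspace TP. (\<forall>u v a b. fst p (a *\<^sub>R u + b *\<^sub>R v) = a * fst p u + b * fst p v) \<and>
   (\<forall>x. \<bar>fst p x\<bar> \<le> norm x) \<and>
   (\<forall>k u v a b. u \<in> Y k \<longrightarrow> v \<in> Y k \<longrightarrow>
      snd (snd p) k (a *\<^sub>R u + b *\<^sub>R v) = a * snd (snd p) k u + b * snd (snd p) k v) \<and>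
   (\<forall>k y. y \<notin> Y k \<longrightarrow> snd (snd p) k y = 0) \<and>
   (\<forall>k y. \<bar>snd (snd p) k y\<bar> \<le> norm y) \<and>
   (\<forall>k x y. y \<in> Y k \<longrightarrow> \<bar>fst p x + snd (snd p) k y\<bar> \<le> N k x y) \<and>
   (\<forall>k. 0 \<le> fst (snd p) k \<and> fst (snd p) k \<le> 1) \<and>
   (\<forall>n. (\<Sum>k<n. fst (snd p) k * fst (snd p) k) \<le> 1)}"
    by (simp add: KP_def)
  also have "closedin TP \<dots>"
    by (intro cl_conj cl_all cl_imp cl_eq cl_le cl_abs;
        (intro continuous_intros ev1 ev2 ev3)?; simp)
  finally show ?thesis .
qed

lemma KP_compact: "compactin TP (KP Y N)"
proof -
  let ?B = "PiE UNIV (\<lambda>x. {-norm x..norm x}) \<times> PiE UNIV (\<lambda>_. {0..1::real}) \<times>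
     PiE UNIV (\<lambda>k. PiE UNIV (\<lambda>y. {-norm y..norm y}))"
  have "compactin TP ?B"
    unfolding TP_def
    by (intro compactin_Times[THEN iffD2] disjI2 conjI compactin_PiE[THEN iffD2] ballI; simp)
  moreover have "KP Y N \<subseteq> ?B"
    apply (auto simp: KP_def PiE_iff abs_le_iff)
    apply (metis minus_le_iff)+
    done
  ultimately show ?thesis
    using KP_closed closed_compactin by blast
qed



lemma amgm_eps:
  fixes a w e :: real
  assumes "0 < e"
  shows "a * w \<le> (e * a\<^sup>2 + w\<^sup>2 / e) / 2"
proof -
  have "0 \<le> (e * a - w)\<^sup>2 / e" using assms by simp
  also have "(e * a - w)\<^sup>2 / e = e * a\<^sup>2 - 2 * a * w + w\<^sup>2 / e"
    using assms by (simp add: power2_eq_square field_simps)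
  finally show ?thesis by simp
qed

lemma aux_abs:
  fixes x C A T e :: real
  assumes "x \<le> C" "-x \<le> C" "C = (A + T)/2" "A \<le> e"
  shows "\<bar>x\<bar> \<le> (e + T)/2"
  unfolding abs_le_iff using assms by argo

lemma alpha_summable:
  fixes \<alpha> :: "nat \<Rightarrow> real"
  assumes "\<forall>n. (\<Sum>k<n. \<alpha> k * \<alpha> k) \<le> 1"
  shows "summable (\<lambda>k. (\<alpha> k)\<^sup>2) \<and> (\<Sum>k. (\<alpha> k)\<^sup>2) \<le> 1"
proof -
  have b: "\<And>n. (\<Sum>k<n. (\<alpha> k)\<^sup>2) \<le> 1" using assms by (simp add: power2_eq_square)
  have s: "summable (\<lambda>k. (\<alpha> k)\<^sup>2)"
  proof (rule bounded_imp_summable[of _ 1])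
    fix n show "(\<Sum>k\<le>n. (\<alpha> k)\<^sup>2) \<le> 1" using b[of "Suc n"] by (simp add: lessThan_Suc_atMost)
  qed simp
  then show ?thesis using suminf_le_const[OF s b] by simp
qed

lemma tail_bound:
  fixes \<alpha> c w :: "nat \<Rightarrow> real"
  assumes a0: "\<forall>k. 0 \<le> \<alpha> k" and a1: "\<forall>n. (\<Sum>k<n. \<alpha> k * \<alpha> k) \<le> 1"
    and cw: "\<forall>k. \<bar>c k\<bar> \<le> w k" and ws: "summable (\<lambda>k. (w k)\<^sup>2)" and e: "e > 0"
  shows "summable (\<lambda>k. \<alpha> k * c k) \<and>
     \<bar>(\<Sum>k. \<alpha> k * c k) - (\<Sum>k<n. \<alpha> k * c k)\<bar> \<le> (e + (\<Sum>k. (w (k+n))\<^sup>2) / e) / 2"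
proof -
  obtain as: "summable (\<lambda>k. (\<alpha> k)\<^sup>2)" and al: "(\<Sum>k. (\<alpha> k)\<^sup>2) \<le> 1"
    using alpha_summable[OF a1] by blast
  have bnd: "\<bar>\<alpha> k * c k\<bar> \<le> (e * (\<alpha> k)\<^sup>2 + (w k)\<^sup>2 / e) / 2" for k
  proof -
    have "\<bar>\<alpha> k * c k\<bar> = \<alpha> k * \<bar>c k\<bar>" using a0 by (simp add: abs_mult)
    also have "\<dots> \<le> \<alpha> k * w k" using a0 cw by (simp add: mult_left_mono)
    also have "\<dots> \<le> (e * (\<alpha> k)\<^sup>2 + (w k)\<^sup>2 / e) / 2" by (rule amgm_eps[OF e])
    finally show ?thesis .
  qed
  have cs: "summable (\<lambda>k. (e * (\<alpha> k)\<^sup>2 + (w k)\<^sup>2 / e) / 2)"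
    using as ws by (intro summable_divide summable_add summable_mult) auto
  have s: "summable (\<lambda>k. \<alpha> k * c k)"
    by (rule summable_comparison_test'[OF cs, of 0]) (use bnd in auto)
  let ?b = "\<lambda>k. \<alpha> (k+n) * c (k+n)"
  let ?c = "\<lambda>k. (e * (\<alpha> (k+n))\<^sup>2 + (w (k+n))\<^sup>2 / e) / 2"
  have eq: "(\<Sum>k. \<alpha> k * c k) - (\<Sum>k<n. \<alpha> k * c k) = (\<Sum>k. ?b k)"
    using suminf_minus_initial_segment[OF s, of n] by simp
  have bs: "summable ?b" using summable_ignore_initial_segment[OF s, of n] by simp
  have css: "summable ?c" using summable_ignore_initial_segment[OF cs, of n] by simp
  have as': "summable (\<lambda>k. (\<alpha> (k+n))\<^sup>2)" using summable_ignore_initial_segment[OF as, of n] by simp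
  have ws': "summable (\<lambda>k. (w (k+n))\<^sup>2)" using summable_ignore_initial_segment[OF ws, of n] by simp
  have f1: "(\<Sum>k. ?b k) \<le> (\<Sum>k. ?c k)"
    by (rule suminf_le[OF _ bs css]) (use bnd in \<open>smt (verit) abs_le_iff\<close>)
  have f2: "- (\<Sum>k. ?b k) \<le> (\<Sum>k. ?c k)"
  proof -
    have "(\<Sum>k. - ?b k) \<le> (\<Sum>k. ?c k)"
      by (rule suminf_le[OF _ summable_minus[OF bs] css]) (use bnd in \<open>smt (verit) abs_le_iff\<close>)
    then show ?thesis using suminf_minus[OF bs] by simp
  qed
  have f3: "(\<Sum>k. ?c k) = (e * (\<Sum>k. (\<alpha> (k+n))\<^sup>2) + (\<Sum>k. (w (k+n))\<^sup>2) / e) / 2"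
  proof -
    have s1: "summable (\<lambda>k. e * (\<alpha> (k+n))\<^sup>2)" using as' by (rule summable_mult)
    have s2: "summable (\<lambda>k. (w (k+n))\<^sup>2 / e)" using ws' by (rule summable_divide)
    have "(\<Sum>k. ?c k) = (\<Sum>k. e * (\<alpha> (k+n))\<^sup>2 + (w (k+n))\<^sup>2 / e) / 2"
      by (rule suminf_divide[OF summable_add[OF s1 s2]])
    also have "\<dots> = ((\<Sum>k. e * (\<alpha> (k+n))\<^sup>2) + (\<Sum>k. (w (k+n))\<^sup>2 / e)) / 2"
      by (simp add: suminf_add[OF s1 s2])
    also have "\<dots> = (e * (\<Sum>k. (\<alpha> (k+n))\<^sup>2) + (\<Sum>k. (w (k+n))\<^sup>2) / e) / 2"
      by (simp add: suminf_mult[OF as'] suminf_divide[OF ws'])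
    finally show ?thesis .
  qed
  have f4: "(\<Sum>k. (\<alpha> (k+n))\<^sup>2) \<le> 1"
  proof -
    have "(\<Sum>k. (\<alpha> (k+n))\<^sup>2) = (\<Sum>k. (\<alpha> k)\<^sup>2) - (\<Sum>k<n. (\<alpha> k)\<^sup>2)"
      by (rule suminf_minus_initial_segment[OF as])
    moreover have "(\<Sum>k<n. (\<alpha> k)\<^sup>2) \<ge> 0" by (simp add: sum_nonneg)
    ultimately show ?thesis using al by linarith
  qed
  have f5: "e * (\<Sum>k. (\<alpha> (k+n))\<^sup>2) \<le> e"
    using mult_left_mono[OF \<open>(\<Sum>k. (\<alpha> (k+n))\<^sup>2) \<le> 1\<close>, of e] e by simp
  have "\<bar>\<Sum>k. ?b k\<bar> \<le> (e + (\<Sum>k. (w (k+n))\<^sup>2) / e) / 2"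
    by (rule aux_abs[OF f1 f2 f3 f5])
  then show ?thesis using eq s by simp
qed



definition Phi :: "(nat \<Rightarrow> 'y::real_normed_vector set) \<Rightarrow> (('x \<Rightarrow> real) \<times> (nat \<Rightarrow> real) \<times> (nat \<Rightarrow> 'y \<Rightarrow> real))
   \<Rightarrow> ('x \<times> (nat \<Rightarrow> 'y) \<Rightarrow> real)" where
"Phi Y p = Lambda_fun Y (fst p) (fst (snd p)) (snd (snd p))"

lemma Phi_apply: "(x, yy) \<in> Sigma_set Y \<Longrightarrow>
   Phi Y p (x, yy) = fst p x + (\<Sum>k. fst (snd p) k * snd (snd p) k (yy k))"
  by (simp add: Phi_def Lambda_fun_def)

lemma Phi_cont:
  fixes Y :: "nat \<Rightarrow> 'y::real_normed_vector set" and N :: "nat \<Rightarrow> 'x::real_normed_vector \<Rightarrow> 'y \<Rightarrow> real"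
  shows "continuous_map (subtopology TP (KP Y N)) (product_topology (\<lambda>_. euclideanreal) (Sigma_set Y)) (Phi Y)"
proof -
  let ?X = "subtopology TP (KP Y N)"
  have ext: "Phi Y ` topspace ?X \<subseteq> extensional (Sigma_set Y)"
    by (auto simp: Phi_def Lambda_fun_def)
  have comp: "continuous_map ?X euclideanreal (\<lambda>p. Phi Y p z)" if z: "z \<in> Sigma_set Y" for z
  proof -
    obtain x yy where zxy: "z = (x, yy)" by (cases z)
    have yys: "summable (\<lambda>k. (norm (yy k))\<^sup>2)" using z zxy by (simp add: Sigma_set_def)
    define f :: "nat \<Rightarrow> ('x \<Rightarrow> real) \<times> (nat \<Rightarrow> real) \<times> (nat \<Rightarrow> 'y \<Rightarrow> real) \<Rightarrow> real"
      where "f n p = fst p x + (\<Sum>k<n. fst (snd p) k * snd (snd p) k (yy k))" for n p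
    have "continuous_map ?X Met_TC.mtopology (\<lambda>p. Phi Y p z)"
    proof (rule Met_TC.continuous_map_uniform_limit[where F=sequentially and f=f])
      show "\<forall>\<^sub>F n in sequentially. continuous_map ?X Met_TC.mtopology (f n)"
        unfolding f_def mtopology_is_euclidean
        by (intro always_eventually allI continuous_map_from_subtopology continuous_intros ev1 ev2 ev3 finite_lessThan)
    next
      fix e :: real assume e: "0 < e"
      obtain M where M: "\<forall>n\<ge>M. norm (\<Sum>i. (norm (yy (i + n)))\<^sup>2) < e * e"
        using suminf_exist_split[OF _ yys, of "e*e"] e by auto
      show "\<forall>\<^sub>F n in sequentially. \<forall>p\<in>topspace ?X. Phi Y p z \<in> UNIV \<and> dist (f n p) (Phi Y p z) < e"
        unfolding eventually_sequentially
      proof (intro exI allI impI ballI conjI)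
        fix n p assume n: "M \<le> n" and p: "p \<in> topspace ?X"
        then have pK: "p \<in> KP Y N" by simp
        have T: "(\<Sum>i. (norm (yy (i + n)))\<^sup>2) < e * e" using M n by auto
        have tb: "\<bar>(\<Sum>k. fst (snd p) k * snd (snd p) k (yy k)) - (\<Sum>k<n. fst (snd p) k * snd (snd p) k (yy k))\<bar>
            \<le> (e + (\<Sum>k. (norm (yy (k+n)))\<^sup>2) / e) / 2"
          using tail_bound[of "fst (snd p)" "\<lambda>k. snd (snd p) k (yy k)" "\<lambda>k. norm (yy k)" e n] pK yys e
          by (auto simp: KP_def)
        have "(\<Sum>k. (norm (yy (k+n)))\<^sup>2) / e < e"
          using T e by (simp add: divide_less_eq)
        then have "\<bar>(\<Sum>k. fst (snd p) k * snd (snd p) k (yy k)) - (\<Sum>k<n. fst (snd p) k * snd (snd p) k (yy k))\<bar> < e"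
          using tb by argo
        then show "dist (f n p) (Phi Y p z) < e"
          using z by (simp add: zxy Phi_apply f_def dist_real_def abs_minus_commute)
      qed simp
    qed simp
    then show ?thesis by simp
  qed
  show ?thesis
    using ext comp by (simp add: continuous_map_componentwise)
qed



lemma setting_facts:
  fixes Y :: "nat \<Rightarrow> 'y::banach set" and N :: "nat \<Rightarrow> 'x::banach \<Rightarrow> 'y \<Rightarrow> real"
  assumes "l2sum_setting TYPE('x) Y N"
  shows "subspace (Y k)"
    and "y \<in> Y k \<Longrightarrow> 0 \<le> N k x y"
    and "y \<in> Y k \<Longrightarrow> N k x y = 0 \<Longrightarrow> x = 0 \<and> y = 0"
    and "y \<in> Y k \<Longrightarrow> N k (c *\<^sub>R x) (c *\<^sub>R y) = \<bar>c\<bar> * N k x y"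
    and "y1 \<in> Y k \<Longrightarrow> y2 \<in> Y k \<Longrightarrow> N k (x1 + x2) (y1 + y2) \<le> N k x1 y1 + N k x2 y2"
    and "N k x 0 = norm x"
    and "y \<in> Y k \<Longrightarrow> N k 0 y = norm y"
    and "y \<in> Y k \<Longrightarrow> norm x \<le> N k x y"
proof -
  note h = assms[unfolded l2sum_setting_def]
  show "subspace (Y k)" using h by simp
  show "y \<in> Y k \<Longrightarrow> 0 \<le> N k x y" using h[THEN conjunct2, THEN conjunct1] by blast
  show "y \<in> Y k \<Longrightarrow> N k x y = 0 \<Longrightarrow> x = 0 \<and> y = 0" using h[THEN conjunct2, THEN conjunct2, THEN conjunct1] by blast
  show "y \<in> Y k \<Longrightarrow> N k (c *\<^sub>R x) (c *\<^sub>R y) = \<bar>c\<bar> * N k x y" using h[THEN conjunct2, THEN conjunct2, THEN conjunct2, THEN conjunct1] by blast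
  show "y1 \<in> Y k \<Longrightarrow> y2 \<in> Y k \<Longrightarrow> N k (x1 + x2) (y1 + y2) \<le> N k x1 y1 + N k x2 y2" using h[THEN conjunct2, THEN conjunct2, THEN conjunct2, THEN conjunct2, THEN conjunct1] by blast
  show "N k x 0 = norm x" using h[THEN conjunct2, THEN conjunct2, THEN conjunct2, THEN conjunct2, THEN conjunct2, THEN conjunct1] by blast
  show "y \<in> Y k \<Longrightarrow> N k 0 y = norm y" using h[THEN conjunct2, THEN conjunct2, THEN conjunct2, THEN conjunct2, THEN conjunct2, THEN conjunct2, THEN conjunct1] by blast
  show "y \<in> Y k \<Longrightarrow> norm x \<le> N k x y" using h[THEN conjunct2, THEN conjunct2, THEN conjunct2, THEN conjunct2, THEN conjunct2, THEN conjunct2, THEN conjunct2] by blast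
qed

lemma dual_on_facts:
  assumes "f \<in> dual_on S" "subspace S"
  shows "f 0 = 0" and "u \<in> S \<Longrightarrow> f (c *\<^sub>R u) = c * f u"
    and "\<exists>C. \<forall>u\<in>S. \<bar>f u\<bar> \<le> C * norm u"
proof -
  have lin: "\<And>u v a b. u \<in> S \<Longrightarrow> v \<in> S \<Longrightarrow> f (a *\<^sub>R u + b *\<^sub>R v) = a * f u + b * f v"
    using assms(1) by (auto simp: dual_on_def)
  have "0 \<in> S" using assms(2) by (rule subspace_0)
  from lin[OF this this, of 0 0] show "f 0 = 0" by simp
  show "u \<in> S \<Longrightarrow> f (c *\<^sub>R u) = c * f u"
    using lin[of u u c 0] by simp
  show "\<exists>C. \<forall>u\<in>S. \<bar>f u\<bar> \<le> C * norm u"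
    using assms(1) by (auto simp: dual_on_def)
qed

lemma key:
  fixes Y :: "nat \<Rightarrow> 'y::banach set" and N :: "nat \<Rightarrow> 'x::banach \<Rightarrow> 'y \<Rightarrow> real"
  assumes set: "l2sum_setting TYPE('x) Y N" and bl: "bounded_linear xs"
    and d: "ys \<in> dual_on (Y k)" and s: "sum_dual_norm (Y k) (N k) xs ys \<le> 1"
    and y: "y \<in> Y k"
  shows "\<bar>xs x + ys y\<bar> \<le> N k x y"
proof -
  note S = setting_facts[OF set]
  have sub: "subspace (Y k)" by (rule S(1))
  have ys0: "ys 0 = 0" and yssc: "\<And>u c. u \<in> Y k \<Longrightarrow> ys (c *\<^sub>R u) = c * ys u"
    using dual_on_facts[OF d sub] by auto
  obtain C where C: "\<forall>u\<in>Y k. \<bar>ys u\<bar> \<le> C * norm u" using dual_on_facts(3)[OF d sub] by blast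
  obtain K where K: "\<And>x. norm (xs x) \<le> norm x * K" using bounded_linear.bounded[OF bl] by blast
  let ?A = "{\<bar>xs x + ys y\<bar> | x y. y \<in> Y k \<and> N k x y \<le> 1}"
  have bnd: "a \<le> \<bar>K\<bar> + 2 * \<bar>C\<bar>" if am: "a \<in> ?A" for a
  proof -
    obtain x' y' where a: "a = \<bar>xs x' + ys y'\<bar>" and y': "y' \<in> Y k" and n: "N k x' y' \<le> 1"
      using am by blast
    have nx: "norm x' \<le> 1" using S(8)[OF y', of x'] n by simp
    have "norm y' = N k (x' + - x') (y' + 0)" using S(7)[OF y'] by simp
    also have "\<dots> \<le> N k x' y' + N k (- x') 0" by (rule S(5)[OF y' subspace_0[OF sub]])
    also have "\<dots> \<le> 2" using n nx S(6)[of k "- x'"] by simp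
    finally have ny: "norm y' \<le> 2" .
    have "\<bar>xs x'\<bar> \<le> norm x' * K" using K[of x'] by simp
    also have "\<dots> \<le> norm x' * \<bar>K\<bar>" by (simp add: mult_left_mono)
    also have "\<dots> \<le> \<bar>K\<bar>" using nx by (simp add: mult_left_le_one_le)
    finally have h1: "\<bar>xs x'\<bar> \<le> \<bar>K\<bar>" .
    have "\<bar>ys y'\<bar> \<le> C * norm y'" using C y' by blast
    also have "\<dots> \<le> \<bar>C\<bar> * norm y'" by (simp add: mult_right_mono)
    also have "\<dots> \<le> \<bar>C\<bar> * 2" using ny by (simp add: mult_left_mono)
    finally have h2: "\<bar>ys y'\<bar> \<le> 2 * \<bar>C\<bar>" by simp
    show ?thesis using a h1 h2 by argo
  qed
  have bdd: "bdd_above ?A" using bnd by (intro bdd_aboveI) blast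
  have le1: "\<bar>xs x' + ys y'\<bar> \<le> 1" if "y' \<in> Y k" "N k x' y' \<le> 1" for x' y'
  proof -
    have "\<bar>xs x' + ys y'\<bar> \<le> Sup ?A" by (rule cSup_upper[OF _ bdd]) (use that in blast)
    then show ?thesis using s by (simp add: sum_dual_norm_def)
  qed
  show ?thesis
  proof (cases "N k x y = 0")
    case True
    then have "x = 0" "y = 0" using S(3)[OF y] by auto
    then show ?thesis using ys0 linear_0[OF bounded_linear.linear[OF bl]] True by simp
  next
    case False
    then have t: "N k x y > 0" using S(2)[OF y, of x] by simp
    let ?c = "1 / N k x y"
    have cy: "?c *\<^sub>R y \<in> Y k" using sub y by (rule subspace_scale)
    have "N k (?c *\<^sub>R x) (?c *\<^sub>R y) = 1" using S(4)[OF y, of ?c x] t by simp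
    then have "\<bar>xs (?c *\<^sub>R x) + ys (?c *\<^sub>R y)\<bar> \<le> 1" using le1[OF cy] by simp
    moreover have "xs (?c *\<^sub>R x) + ys (?c *\<^sub>R y) = ?c * (xs x + ys y)"
      using linear_scale[OF bounded_linear.linear[OF bl]] yssc[OF y] by (simp add: add_divide_distrib)
    ultimately have "?c * \<bar>xs x + ys y\<bar> \<le> 1" using t by (simp add: abs_mult)
    then show ?thesis using t by (simp add: divide_le_eq mult.commute)
  qed
qed



lemma KP_to_Lambda:
  fixes Y :: "nat \<Rightarrow> 'y::banach set" and N :: "nat \<Rightarrow> 'x::banach \<Rightarrow> 'y \<Rightarrow> real"
  assumes set: "l2sum_setting TYPE('x) Y N" and pK: "p \<in> KP Y N"
  shows "Phi Y p \<in> Lambda_set Y N"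
proof -
  note S = setting_facts[OF set]
  obtain xs \<alpha> ys where p: "p = (xs, \<alpha>, ys)" by (cases p)
  have lin: "\<And>u v a b. xs (a *\<^sub>R u + b *\<^sub>R v) = a * xs u + b * xs v"
    and xb: "\<And>x. \<bar>xs x\<bar> \<le> norm x"
    and ylin: "\<And>k u v a b. u \<in> Y k \<Longrightarrow> v \<in> Y k \<Longrightarrow> ys k (a *\<^sub>R u + b *\<^sub>R v) = a * ys k u + b * ys k v"
    and yb: "\<And>k y. \<bar>ys k y\<bar> \<le> norm y"
    and nb: "\<And>k x y. y \<in> Y k \<Longrightarrow> \<bar>xs x + ys k y\<bar> \<le> N k x y"
    and a01: "\<forall>k. 0 \<le> \<alpha> k \<and> \<alpha> k \<le> 1"
    and asum: "\<forall>n. (\<Sum>k<n. \<alpha> k * \<alpha> k) \<le> 1"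
    using pK p by (auto simp: KP_def)
  have bl: "bounded_linear xs"
  proof (rule bounded_linear_intro[where K=1])
    show "xs (x + y) = xs x + xs y" for x y using lin[of 1 x 1 y] by simp
    show "xs (r *\<^sub>R x) = r *\<^sub>R xs x" for r x using lin[of r x 0 0] by simp
    show "norm (xs x) \<le> norm x * 1" for x using xb[of x] by simp
  qed
  have du: "ys k \<in> dual_on (Y k)" for k
    unfolding dual_on_def using ylin yb by (auto intro!: exI[of _ 1])
  have sd: "sum_dual_norm (Y k) (N k) xs (ys k) \<le> 1" for k
    unfolding sum_dual_norm_def
  proof (rule cSup_least)
    show "{\<bar>xs x + ys k y\<bar> | x y. y \<in> Y k \<and> N k x y \<le> 1} \<noteq> {}"
    proof -
      have "N k 0 0 \<le> 1" using S(6)[of k 0] by simp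
      then show ?thesis using subspace_0[OF S(1)[of k]] by blast
    qed
    show "a \<le> 1" if am: "a \<in> {\<bar>xs x + ys k y\<bar> | x y. y \<in> Y k \<and> N k x y \<le> 1}" for a
    proof -
      obtain x y where "a = \<bar>xs x + ys k y\<bar>" "y \<in> Y k" "N k x y \<le> 1" using am by blast
      then show ?thesis using nb[of y k x] by linarith
    qed
  qed
  obtain as: "summable (\<lambda>k. (\<alpha> k)\<^sup>2)" and al: "(\<Sum>k. (\<alpha> k)\<^sup>2) \<le> 1"
    using alpha_summable asum by blast
  show ?thesis
    unfolding Lambda_set_def Phi_def p using bl du sd a01 as al by auto
qed

lemma Lambda_to_KP:
  fixes Y :: "nat \<Rightarrow> 'y::banach set" and N :: "nat \<Rightarrow> 'x::banach \<Rightarrow> 'y \<Rightarrow> real"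
  assumes set: "l2sum_setting TYPE('x) Y N" and f: "f \<in> Lambda_set Y N"
  shows "\<exists>p\<in>KP Y N. f = Phi Y p"
proof -
  note S = setting_facts[OF set]
  obtain xs \<alpha> ys where fd: "f = Lambda_fun Y xs \<alpha> ys" and bl: "bounded_linear xs"
    and du: "\<forall>k. ys k \<in> dual_on (Y k)" and sd: "\<forall>k. sum_dual_norm (Y k) (N k) xs (ys k) \<le> 1"
    and a01: "\<forall>k. 0 \<le> \<alpha> k \<and> \<alpha> k \<le> 1" and as: "summable (\<lambda>k. (\<alpha> k)\<^sup>2)"
    and al: "(\<Sum>k. (\<alpha> k)\<^sup>2) \<le> 1"
    using f unfolding Lambda_set_def by blast
  define ys' where "ys' k y = (if y \<in> Y k then ys k y else 0)" for k y
  have nb: "\<bar>xs x + ys k y\<bar> \<le> N k x y" if "y \<in> Y k" for k x y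
    using key[OF set bl du[rule_format] sd[rule_format] that] .
  have ys0: "ys k 0 = 0" for k using dual_on_facts(1)[OF du[rule_format] S(1)] .
  have xs0: "xs 0 = 0" using linear_0[OF bounded_linear.linear[OF bl]] .
  have ylin: "ys k (a *\<^sub>R u + b *\<^sub>R v) = a * ys k u + b * ys k v" if "u \<in> Y k" "v \<in> Y k" for k u v a b
    using du that unfolding dual_on_def by blast
  let ?p = "(xs, \<alpha>, ys')"
  have "?p \<in> KP Y N"
    unfolding KP_def
  proof (simp only: mem_Collect_eq fst_conv snd_conv, intro conjI allI impI)
    fix u v a b show "xs (a *\<^sub>R u + b *\<^sub>R v) = a * xs u + b * xs v"
      using linear_add[OF bounded_linear.linear[OF bl]] linear_scale[OF bounded_linear.linear[OF bl]] by simp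
  next
    fix x
    have "\<bar>xs x + ys 0 0\<bar> \<le> N 0 x 0" using nb subspace_0[OF S(1)] by blast
    then show "\<bar>xs x\<bar> \<le> norm x" using ys0 S(6) by simp
  next
    fix k u v a b assume "u \<in> Y k" "v \<in> Y k"
    moreover then have "a *\<^sub>R u + b *\<^sub>R v \<in> Y k"
      using S(1) by (simp add: subspace_add subspace_scale)
    ultimately show "ys' k (a *\<^sub>R u + b *\<^sub>R v) = a * ys' k u + b * ys' k v"
      using ylin by (simp add: ys'_def)
  next
    fix k y assume "y \<notin> Y k" then show "ys' k y = 0" by (simp add: ys'_def)
  next
    fix k y show "\<bar>ys' k y\<bar> \<le> norm y"
    proof (cases "y \<in> Y k")
      case True
      then have "\<bar>xs 0 + ys k y\<bar> \<le> N k 0 y" by (rule nb)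
      then show ?thesis using True xs0 S(7) by (simp add: ys'_def)
    qed (simp add: ys'_def)
  next
    fix k x y assume "y \<in> Y k" then show "\<bar>xs x + ys' k y\<bar> \<le> N k x y"
      using nb by (simp add: ys'_def)
  next
    fix k show "0 \<le> \<alpha> k" using a01 by blast
  next
    fix k show "\<alpha> k \<le> 1" using a01 by blast
  next
    fix n
    have "(\<Sum>k<n. (\<alpha> k)\<^sup>2) \<le> (\<Sum>k. (\<alpha> k)\<^sup>2)"
      by (rule sum_le_suminf[OF as]) auto
    then show "(\<Sum>k<n. \<alpha> k * \<alpha> k) \<le> 1" using al by (simp add: power2_eq_square)
  qed
  moreover have "f = Phi Y ?p"
    unfolding fd Phi_def Lambda_fun_def
    by (intro restrict_ext) (auto simp: Sigma_set_def ys'_def)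
  ultimately show ?thesis by blast
qed



lemma Phi_bound:
  assumes pK: "p \<in> KP Y N" and z: "(x, yy) \<in> Sigma_set Y"
  shows "summable (\<lambda>k. fst (snd p) k * snd (snd p) k (yy k)) \<and>
    \<bar>Phi Y p (x, yy)\<bar> \<le> norm x + (1 + (\<Sum>k. (norm (yy k))\<^sup>2)) / 2"
proof -
  have yys: "summable (\<lambda>k. (norm (yy k))\<^sup>2)" using z by (simp add: Sigma_set_def)
  have tb: "summable (\<lambda>k. fst (snd p) k * snd (snd p) k (yy k)) \<and>
     \<bar>(\<Sum>k. fst (snd p) k * snd (snd p) k (yy k)) - (\<Sum>k<0. fst (snd p) k * snd (snd p) k (yy k))\<bar>
        \<le> (1 + (\<Sum>k. (norm (yy (k+0)))\<^sup>2) / 1) / 2"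
    using tail_bound[of "fst (snd p)" "\<lambda>k. snd (snd p) k (yy k)" "\<lambda>k. norm (yy k)" 1 0] pK yys
    by (auto simp: KP_def)
  have xb: "\<bar>fst p x\<bar> \<le> norm x" using pK by (auto simp: KP_def)
  show ?thesis using tb xb z by (simp add: Phi_apply) argo
qed

lemma sq_sum_le:
  fixes a b :: "'a::real_normed_vector" and s t :: real
  shows "(norm (s *\<^sub>R a + t *\<^sub>R b))\<^sup>2 \<le> 2 * s\<^sup>2 * (norm a)\<^sup>2 + 2 * t\<^sup>2 * (norm b)\<^sup>2"
proof -
  have "norm (s *\<^sub>R a + t *\<^sub>R b) \<le> \<bar>s\<bar> * norm a + \<bar>t\<bar> * norm b"
    using norm_triangle_ineq[of "s *\<^sub>R a" "t *\<^sub>R b"] by simp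
  then have "(norm (s *\<^sub>R a + t *\<^sub>R b))\<^sup>2 \<le> (\<bar>s\<bar> * norm a + \<bar>t\<bar> * norm b)\<^sup>2"
    by (rule power_mono) simp
  also have "\<dots> \<le> 2 * (\<bar>s\<bar> * norm a)\<^sup>2 + 2 * (\<bar>t\<bar> * norm b)\<^sup>2"
    using zero_le_power2[of "\<bar>s\<bar> * norm a - \<bar>t\<bar> * norm b"]
    by (simp add: power2_eq_square algebra_simps)
  also have "\<dots> = 2 * s\<^sup>2 * (norm a)\<^sup>2 + 2 * t\<^sup>2 * (norm b)\<^sup>2"
    by (simp add: power_mult_distrib)
  finally show ?thesis .
qed

lemma Sigma_closed:
  fixes Y :: "nat \<Rightarrow> 'y::banach set" and N :: "nat \<Rightarrow> 'x::banach \<Rightarrow> 'y \<Rightarrow> real"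
  assumes set: "l2sum_setting TYPE('x) Y N" and z: "z \<in> Sigma_set Y" and w: "w \<in> Sigma_set Y"
  shows "sig_add (sig_scale a z) (sig_scale b w) \<in> Sigma_set Y"
proof -
  note S = setting_facts[OF set]
  obtain x yy where zz: "z = (x, yy)" by (cases z)
  obtain x' ww where wz: "w = (x', ww)" by (cases w)
  have yy: "\<forall>k. yy k \<in> Y k" "summable (\<lambda>k. (norm (yy k))\<^sup>2)" using z zz by (auto simp: Sigma_set_def)
  have ww: "\<forall>k. ww k \<in> Y k" "summable (\<lambda>k. (norm (ww k))\<^sup>2)" using w wz by (auto simp: Sigma_set_def)
  have mem: "a *\<^sub>R yy k + b *\<^sub>R ww k \<in> Y k" for k
    using yy ww S(1)[of k] by (simp add: subspace_add subspace_scale)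
  have g: "summable (\<lambda>k. 2 * a\<^sup>2 * (norm (yy k))\<^sup>2 + 2 * b\<^sup>2 * (norm (ww k))\<^sup>2)"
    using yy(2) ww(2) by (intro summable_add summable_mult)
  have "summable (\<lambda>k. (norm (a *\<^sub>R yy k + b *\<^sub>R ww k))\<^sup>2)"
    by (rule summable_comparison_test'[OF g, of 0]) (simp add: sq_sum_le)
  then show ?thesis using mem zz wz by (simp add: Sigma_set_def sig_add_def sig_scale_def)
qed

lemma Phi_lin:
  fixes Y :: "nat \<Rightarrow> 'y::banach set" and N :: "nat \<Rightarrow> 'x::banach \<Rightarrow> 'y \<Rightarrow> real"
  assumes set: "l2sum_setting TYPE('x) Y N" and pK: "p \<in> KP Y N"
    and z: "z \<in> Sigma_set Y" and w: "w \<in> Sigma_set Y"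
  shows "Phi Y p (sig_add (sig_scale a z) (sig_scale b w)) = a * Phi Y p z + b * Phi Y p w"
proof -
  obtain x yy where zz: "z = (x, yy)" by (cases z)
  obtain x' ww where wz: "w = (x', ww)" by (cases w)
  obtain xs \<alpha> ys where p: "p = (xs, \<alpha>, ys)" by (cases p)
  have yy: "\<forall>k. yy k \<in> Y k" using z zz by (auto simp: Sigma_set_def)
  have ww: "\<forall>k. ww k \<in> Y k" using w wz by (auto simp: Sigma_set_def)
  have lin: "\<And>u v a b. xs (a *\<^sub>R u + b *\<^sub>R v) = a * xs u + b * xs v"
    and ylin: "\<And>k u v a b. u \<in> Y k \<Longrightarrow> v \<in> Y k \<Longrightarrow> ys k (a *\<^sub>R u + b *\<^sub>R v) = a * ys k u + b * ys k v"
    using pK p by (auto simp: KP_def)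
  have s1: "summable (\<lambda>k. \<alpha> k * ys k (yy k))" using Phi_bound[OF pK, of x yy] z zz p by simp
  have s2: "summable (\<lambda>k. \<alpha> k * ys k (ww k))" using Phi_bound[OF pK, of x' ww] w wz p by simp
  have zw: "(a *\<^sub>R x + b *\<^sub>R x', \<lambda>k. a *\<^sub>R yy k + b *\<^sub>R ww k) \<in> Sigma_set Y"
    using Sigma_closed[OF set z w, of a b] zz wz by (simp add: sig_add_def sig_scale_def)
  have "(\<Sum>k. \<alpha> k * ys k (a *\<^sub>R yy k + b *\<^sub>R ww k)) = (\<Sum>k. a * (\<alpha> k * ys k (yy k)) + b * (\<alpha> k * ys k (ww k)))"
    using ylin yy ww by (simp add: algebra_simps)
  also have "\<dots> = a * (\<Sum>k. \<alpha> k * ys k (yy k)) + b * (\<Sum>k. \<alpha> k * ys k (ww k))"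
    using suminf_add[OF summable_mult[OF s1, of a] summable_mult[OF s2, of b]]
      suminf_mult[OF s1, of a] suminf_mult[OF s2, of b] by simp
  finally have sm: "(\<Sum>k. \<alpha> k * ys k (a *\<^sub>R yy k + b *\<^sub>R ww k)) = a * (\<Sum>k. \<alpha> k * ys k (yy k)) + b * (\<Sum>k. \<alpha> k * ys k (ww k))" .
  show ?thesis
    using zw z w zz wz p
    by (simp add: sig_add_def sig_scale_def Phi_apply lin sm algebra_simps)
qed



theorem lemma2p5:
  fixes Y :: "nat \<Rightarrow> 'y::banach set"
    and N :: "nat \<Rightarrow> 'x::banach \<Rightarrow> 'y \<Rightarrow> real"
  assumes "l2sum_setting TYPE('x) Y N"
  shows "Lambda_set Y N \<subseteq> Sigma_dual Y N \<and> compactin (weak_star_Sigma Y N) (Lambda_set Y N)"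
proof -
  note set = assms
  have eq: "Lambda_set Y N = Phi Y ` KP Y N"
  proof
    show "Lambda_set Y N \<subseteq> Phi Y ` KP Y N" using Lambda_to_KP[OF set] by blast
    show "Phi Y ` KP Y N \<subseteq> Lambda_set Y N" using KP_to_Lambda[OF set] by blast
  qed
  have sub: "Lambda_set Y N \<subseteq> Sigma_dual Y N"
  proof
    fix f assume "f \<in> Lambda_set Y N"
    then obtain p where pK: "p \<in> KP Y N" and fp: "f = Phi Y p" using Lambda_to_KP[OF set] by blast
    have ext: "f \<in> extensional (Sigma_set Y)" by (simp add: fp Phi_def Lambda_fun_def)
    have lin: "\<forall>z\<in>Sigma_set Y. \<forall>w\<in>Sigma_set Y. \<forall>a b.
          f (sig_add (sig_scale a z) (sig_scale b w)) = a * f z + b * f w"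
      using Phi_lin[OF set pK] fp by blast
    have bd: "\<bar>f z\<bar> \<le> 1 * Sigma_norm Y N z" if z: "z \<in> Sigma_set Y" for z
    proof -
      obtain x yy where zz: "z = (x, yy)" by (cases z)
      let ?B = "norm x + (1 + (\<Sum>k. (norm (yy k))\<^sup>2)) / 2"
      have bdd: "bdd_above {\<bar>g z\<bar> | g. g \<in> Lambda_set Y N}"
      proof (rule bdd_aboveI[where M = ?B])
        fix r assume "r \<in> {\<bar>g z\<bar> | g. g \<in> Lambda_set Y N}"
        then obtain g where r: "r = \<bar>g z\<bar>" and g: "g \<in> Lambda_set Y N" by blast
        obtain q where "q \<in> KP Y N" "g = Phi Y q" using Lambda_to_KP[OF set g] by blast
        then show "r \<le> ?B" using Phi_bound[of q Y N x yy] z zz r by simp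
      qed
      have "f \<in> Lambda_set Y N" using KP_to_Lambda[OF set pK] fp by simp
      then have "\<bar>f z\<bar> \<le> Sup {\<bar>g z\<bar> | g. g \<in> Lambda_set Y N}"
        by (intro cSup_upper[OF _ bdd]) blast
      then show ?thesis by (simp add: Sigma_norm_def)
    qed
    show "f \<in> Sigma_dual Y N"
      unfolding Sigma_dual_def using ext lin bd by blast
  qed
  have "compactin (subtopology TP (KP Y N)) (KP Y N)"
    using KP_compact by (simp add: compactin_subtopology)
  from image_compactin[OF this Phi_cont]
  have comp: "compactin (product_topology (\<lambda>_. euclideanreal) (Sigma_set Y)) (Lambda_set Y N)"
    using eq by simp
  show ?thesis using sub comp by (simp add: weak_star_Sigma_def compactin_subtopology)
qed


end
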